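(* Let $X$ be a semigroup. Every idempotent $e\in I\!Z(X)$ is viable.
   Context: $Z(X)=\{z\in X:\forall x\in X\ (xz=zx)\}$, $I\!Z(X)=\{z\in Z(X):zX\subseteq Z(X)\}$. For an idempotent $e$, $H_e$ is the maximal subgroup of $X$ containing $e$; $e$ is viable if $X\setminus\{x\in X: xe=ex\in H_e\}$ is an ideal in $X$ (a set $I$ with $IX\cup XI\subseteq I$). *)

theory Defs
  imports Main
begin

text \<open>The ambient semigroup X is the whole type 'a (class semigroup_mult).\<close>

definition center :: "'a::semigroup_mult set" where
  "center = {z. \<forall>x. x * z = z * x}"

definition ideal_center :: "'a::semigroup_mult set" where
  "ideal_center = {z \<in> center. (\<forall>x. z * x \<in> center)}"

definition idempotent :: "'a::semigroup_mult \<Rightarrow> bool" where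
  "idempotent e \<longleftrightarrow> e * e = e"

definition subgroup_with_id :: "'a::semigroup_mult set \<Rightarrow> 'a \<Rightarrow> bool" where
  "subgroup_with_id G e \<longleftrightarrow> e \<in> G \<and> (\<forall>x\<in>G. \<forall>y\<in>G. x * y \<in> G)
     \<and> (\<forall>x\<in>G. e * x = x \<and> x * e = x \<and> (\<exists>y\<in>G. x * y = e \<and> y * x = e))"

definition max_subgroup :: "'a::semigroup_mult \<Rightarrow> 'a set" where
  "max_subgroup e = \<Union>{G. subgroup_with_id G e}"

definition is_ideal :: "'a::semigroup_mult set \<Rightarrow> bool" where
  "is_ideal I \<longleftrightarrow> (\<forall>i\<in>I. \<forall>x. i * x \<in> I \<and> x * i \<in> I)"

definition viable :: "'a::semigroup_mult \<Rightarrow> bool" where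
  "viable e \<longleftrightarrow> is_ideal (UNIV - {x. x * e = e * x \<and> x * e \<in> max_subgroup e})"

end

theory Submission
  imports Defs
begin

definition unitsE :: "'a::semigroup_mult \<Rightarrow> 'a set" where
  "unitsE e = {z. z * e = z \<and> e * z = z \<and> (\<exists>w. w * e = w \<and> e * w = w \<and> z * w = e \<and> w * z = e)}"

lemma unitsE_I:
  assumes "z * e = z" "e * z = z" "w * e = w" "e * w = w" "z * w = e" "w * z = e"
  shows "z \<in> unitsE e"
  unfolding unitsE_def using assms by blast

lemma unitsE_D:
  assumes "z \<in> unitsE e"
  obtains w where "z * e = z" "e * z = z" "w * e = w" "e * w = w" "z * w = e" "w * z = e"
  using assms unfolding unitsE_def by blast

lemma max_sub_eq:
  fixes e :: "'a::semigroup_mult"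
  assumes "idempotent e"
  shows "max_subgroup e = unitsE e"
proof
  show "max_subgroup e \<subseteq> unitsE e"
  proof
    fix x assume "x \<in> max_subgroup e"
    then obtain G where G: "subgroup_with_id G e" "x \<in> G"
      unfolding max_subgroup_def by blast
    then obtain y where y: "y \<in> G" "x * y = e" "y * x = e"
      unfolding subgroup_with_id_def by blast
    have ax: "\<And>z. z \<in> G \<Longrightarrow> e*z=z \<and> z*e=z" using G(1) unfolding subgroup_with_id_def by blast
    show "x \<in> unitsE e"
      apply (rule unitsE_I[of x e y])
      using ax[OF G(2)] ax[OF y(1)] y by auto
  qed
next
  have "subgroup_with_id (unitsE e) e"
    unfolding subgroup_with_id_def
  proof (intro conjI)
    show "e \<in> unitsE e" using assms unfolding idempotent_def by (intro unitsE_I[of e e e]) auto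
  next
    show "\<forall>x\<in>unitsE e. \<forall>y\<in>unitsE e. x * y \<in> unitsE e"
    proof (intro ballI)
    fix x y assume x: "x \<in> unitsE e" and y: "y \<in> unitsE e"
    from x obtain u where u: "x * e = x" "e * x = x" "u * e = u" "e * u = u" "x * u = e" "u * x = e"
      by (rule unitsE_D)
    from y obtain v where v: "y * e = y" "e * y = y" "v * e = v" "e * v = v" "y * v = e" "v * y = e"
      by (rule unitsE_D)
    have a: "(x*y) * e = x*y" using v(1) by (simp add: mult.assoc)
    have b: "e * (x*y) = x*y" using u(2) by (simp add: mult.assoc[symmetric])
    have "(x*y)*(v*u) = x*(y*v)*u" by (simp add: mult.assoc)
    also have "... = x*u" using v(5) u(1) by (simp add: mult.assoc)
    finally have c: "(x*y)*(v*u) = e" using u(5) by simp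
    have "(v*u)*(x*y) = v*(u*x)*y" by (simp add: mult.assoc)
    also have "... = v*y" using u(6) v(3) by (simp add: mult.assoc)
    finally have d: "(v*u)*(x*y) = e" using v(6) by simp
    have f: "(v*u)*e = v*u" using u(3) by (simp add: mult.assoc)
    have g: "e*(v*u) = v*u" using v(4) by (simp add: mult.assoc[symmetric])
    show "x * y \<in> unitsE e" by (rule unitsE_I[OF a b f g c d])
    qed
  next
    show "\<forall>x\<in>unitsE e. e * x = x \<and> x * e = x \<and> (\<exists>y\<in>unitsE e. x * y = e \<and> y * x = e)"
    proof
    fix x assume x: "x \<in> unitsE e"
    then obtain u where u: "x * e = x" "e * x = x" "u * e = u" "e * u = u" "x * u = e" "u * x = e"
      by (rule unitsE_D)
    have "u \<in> unitsE e" by (rule unitsE_I[OF u(3,4,1,2,6,5)])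
    then show "e * x = x \<and> x * e = x \<and> (\<exists>y\<in>unitsE e. x * y = e \<and> y * x = e)"
      using u by blast
    qed
  qed
  then show "unitsE e \<subseteq> max_subgroup e" unfolding max_subgroup_def by blast
qed

lemma key:
  fixes e a b :: "'a::semigroup_mult"
  assumes ide: "e * e = e" and ec: "\<And>x. x * e = e * x"
    and ac: "\<And>x y. y * (e * x) = (e * x) * y"
    and z: "(a*b)*e \<in> unitsE e"
  shows "a * e \<in> unitsE e"
proof -
  obtain w where w: "(a*b)*e*e = (a*b)*e" "e*((a*b)*e) = (a*b)*e" "w * e = w" "e * w = w" "(a*b)*e * w = e" "w * ((a*b)*e) = e"
    using z by (rule unitsE_D)
  define v where "v = b*e*w"
  have ace: "y * (a*e) = (a*e) * y" for y
  proof -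
    have "y*(e*a) = (e*a)*y" by (rule ac)
    thus ?thesis by (simp only: ec[of a])
  qed
  have 1: "(a*e)*e = a*e" using ide by (simp add: mult.assoc)
  have "e*(a*e) = (e*a)*e" by (simp add: mult.assoc)
  also have "... = (a*e)*e" by (simp only: ec[of a])
  finally have 2: "e*(a*e) = a*e" using 1 by simp
  have 3: "v*e = v" unfolding v_def using w(3) by (simp add: mult.assoc)
  have "e*v = (e*b)*e*w" unfolding v_def by (simp add: mult.assoc)
  also have "... = (b*e)*e*w" by (simp only: ec[of b])
  also have "... = b*(e*e)*w" by (simp only: mult.assoc)
  also have "... = v" unfolding v_def by (simp only: ide)
  finally have 4: "e*v = v" .
  have "(a*e)*v = a*(e*b)*e*w" unfolding v_def by (simp add: mult.assoc)
  also have "... = a*(b*e)*e*w" by (simp only: ec[of b])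
  also have "... = a*b*(e*e)*w" by (simp only: mult.assoc)
  also have "... = a*b*e*w" by (simp only: ide)
  also have "... = e" by (rule w(5))
  finally have 5: "(a*e)*v = e" .
  have 6: "v*(a*e) = e" using 5 ace by metis
  show ?thesis by (rule unitsE_I[OF 1 2 3 4 5 6])
qed

theorem lemma2p5:
  fixes e :: "'a::semigroup_mult"
  assumes "idempotent e" and "e \<in> ideal_center"
  shows "viable e"
proof -
  have ide: "e * e = e" using assms(1) unfolding idempotent_def .
  have ec: "\<And>x. x * e = e * x" using assms(2) unfolding ideal_center_def center_def by blast
  have ac: "\<And>x y. y * (e * x) = (e * x) * y" using assms(2) unfolding ideal_center_def center_def by blast
  have k1: "\<And>a b. (a*b)*e \<in> unitsE e \<Longrightarrow> a * e \<in> unitsE e"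
    using key[OF ide ec ac] by blast
  have k2: "\<And>a b. (a*b)*e \<in> unitsE e \<Longrightarrow> b * e \<in> unitsE e"
  proof -
    fix a b assume h: "(a*b)*e \<in> unitsE e"
    have "(a*b)*e = a*(e*b)" by (metis mult.assoc ec[of b])
    also have "... = (e*b)*a" by (rule ac)
    also have "... = e*(b*a)" by (simp add: mult.assoc)
    also have "... = (b*a)*e" by (rule ec[symmetric])
    finally have "(a*b)*e = (b*a)*e" .
    then show "b * e \<in> unitsE e" using key[OF ide ec ac, of b a] h by simp
  qed
  have eq: "UNIV - {x. x * e = e * x \<and> x * e \<in> max_subgroup e} = {x. x * e \<notin> unitsE e}"
    apply (rule set_eqI)
    apply (simp add: max_sub_eq[OF assms(1)])
    by (metis ec)
  show ?thesis unfolding viable_def eq is_ideal_def using k1 k2 by blast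
qed

end
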